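(* Consider the following heterogeneous treatment effects model. Let $Y$ be a real-valued outcome (with finite mean), $D\in\{0,1\}$ a binary treatment, and $Z\in\{0,1\}$, $W\in\{0,1\}$ two binary instruments. For $z\in\{0,1\}$, let $D_z\in\{0,1\}$ denote the potential treatment when $Z=z$, and for $d,z\in\{0,1\}$ let $Y_{d,z}$ denote the potential outcome when the instrument is $Z=z$ and the treatment is $d$ (potential outcomes are not indexed by $W$). The observed variables $(Y,D,Z,W)$ are generated by $D=D_1Z+D_0(1-Z)$ and $Y=Y_1D+Y_0(1-D)$, where $Y_d=Y_{d,1}Z+Y_{d,0}(1-Z)$. Define the subgroups always takers $\mathrm{AT}=\{D_1=D_0=1\}$, never takers $\mathrm{NT}=\{D_1=D_0=0\}$ and compliers $\mathrm{CP}=\{D_1=1,D_0=0\}$, and for $G\in\{\mathrm{AT},\mathrm{NT},\mathrm{CP}\}$ and $d\in\{0,1\}$ let $\rho_{G,d}=E[Y_{d,1}-Y_{d,0}\mid G]$. Assume: (i) there exist constants $\rho_1,\rho_0$ such that $\rho_{G,d}=\rho_d$ for all $G\in\{\mathrm{AT},\mathrm{NT},\mathrm{CP}\}$ and $d\in\{0,1\}$; (ii) $D_1\geq D_0$; (iii) $(Z,W)$ is independent of $Y_{d,z}$ conditional on $(D_1,D_0)$ for every $d,z\in\{0,1\}$, and $Z$ is independent of $(D_1,D_0)$ conditional on $W$; (iv) $\Pr(D_1>D_0)>0$; (v) $0<\Pr(Z=z,W=w)<1$ for all $z,w\in\{0,1\}$; (vi) for each $G\in\{\mathrm{AT},\mathrm{NT}\}$,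 $\Pr(G\mid W=1)\Pr(\mathrm{CP}\mid W=0)\neq \Pr(G\mid W=0)\Pr(\mathrm{CP}\mid W=1)$. Then the direct effects $(\rho_1,\rho_0)$ and the local average treatment effect $\mathrm{LATE}=E[Y_1-Y_0\mid \mathrm{CP}]$ are point identified, i.e., they are uniquely determined by the joint distribution of the observed variables $(Y,D,Z,W)$.
   Context: $\Pr(G\mid W=w)$ denotes the probability that $(D_1,D_0)$ belongs to subgroup $G$ conditional on $W=w$. "Point identified" means that any two data-generating structures satisfying all the stated assumptions and inducing the same joint distribution of $(Y,D,Z,W)$ yield the same values of $\rho_1$, $\rho_0$ and $\mathrm{LATE}$. *)

theory Defs
  imports "HOL-Probability.Probability"
begin

text \<open>Conventions. Binary variables are booleans (True = 1, False = 0).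
  Dp z is the potential treatment D_z, Yp d z is the potential outcome Y_{d,z}.\<close>

definition cexp :: "'a measure \<Rightarrow> ('a \<Rightarrow> real) \<Rightarrow> 'a set \<Rightarrow> real" where
  "cexp M X A = (\<integral>\<omega>. indicator A \<omega> * X \<omega> \<partial>M) / measure M A"

definition cprob :: "'a measure \<Rightarrow> 'a set \<Rightarrow> 'a set \<Rightarrow> real" where
  "cprob M A B = measure M (A \<inter> B) / measure M B"

definition ev :: "'a measure \<Rightarrow> ('a \<Rightarrow> bool) \<Rightarrow> 'a set" where
  "ev M P = {\<omega> \<in> space M. P \<omega>}"

definition AT :: "'a measure \<Rightarrow> (bool \<Rightarrow> 'a \<Rightarrow> bool) \<Rightarrow> 'a set" where
  "AT M Dp = ev M (\<lambda>\<omega>. Dp True \<omega> \<and> Dp False \<omega>)"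
definition NT :: "'a measure \<Rightarrow> (bool \<Rightarrow> 'a \<Rightarrow> bool) \<Rightarrow> 'a set" where
  "NT M Dp = ev M (\<lambda>\<omega>. \<not> Dp True \<omega> \<and> \<not> Dp False \<omega>)"
definition CP :: "'a measure \<Rightarrow> (bool \<Rightarrow> 'a \<Rightarrow> bool) \<Rightarrow> 'a set" where
  "CP M Dp = ev M (\<lambda>\<omega>. Dp True \<omega> \<and> \<not> Dp False \<omega>)"

definition Dobs :: "(bool \<Rightarrow> 'a \<Rightarrow> bool) \<Rightarrow> ('a \<Rightarrow> bool) \<Rightarrow> 'a \<Rightarrow> bool" where
  "Dobs Dp Z \<omega> = (if Z \<omega> then Dp True \<omega> else Dp False \<omega>)"
definition Yd :: "(bool \<Rightarrow> bool \<Rightarrow> 'a \<Rightarrow> real) \<Rightarrow> ('a \<Rightarrow> bool) \<Rightarrow> bool \<Rightarrow> 'a \<Rightarrow> real" where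
  "Yd Yp Z d \<omega> = (if Z \<omega> then Yp d True \<omega> else Yp d False \<omega>)"
definition Yobs :: "(bool \<Rightarrow> 'a \<Rightarrow> bool) \<Rightarrow> (bool \<Rightarrow> bool \<Rightarrow> 'a \<Rightarrow> real) \<Rightarrow> ('a \<Rightarrow> bool) \<Rightarrow> 'a \<Rightarrow> real" where
  "Yobs Dp Yp Z \<omega> = (if Dobs Dp Z \<omega> then Yd Yp Z True \<omega> else Yd Yp Z False \<omega>)"

definition rhoG :: "'a measure \<Rightarrow> (bool \<Rightarrow> bool \<Rightarrow> 'a \<Rightarrow> real) \<Rightarrow> 'a set \<Rightarrow> bool \<Rightarrow> real" where
  "rhoG M Yp G d = cexp M (\<lambda>\<omega>. Yp d True \<omega> - Yp d False \<omega>) G"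

definition LATE :: "'a measure \<Rightarrow> (bool \<Rightarrow> 'a \<Rightarrow> bool) \<Rightarrow> (bool \<Rightarrow> bool \<Rightarrow> 'a \<Rightarrow> real) \<Rightarrow> ('a \<Rightarrow> bool) \<Rightarrow> real" where
  "LATE M Dp Yp Z = cexp M (\<lambda>\<omega>. Yd Yp Z True \<omega> - Yd Yp Z False \<omega>) (CP M Dp)"

definition obs_dist :: "'a measure \<Rightarrow> (bool \<Rightarrow> 'a \<Rightarrow> bool) \<Rightarrow> (bool \<Rightarrow> bool \<Rightarrow> 'a \<Rightarrow> real)
    \<Rightarrow> ('a \<Rightarrow> bool) \<Rightarrow> ('a \<Rightarrow> bool) \<Rightarrow> (real \<times> bool \<times> bool \<times> bool) measure" where
  "obs_dist M Dp Yp Z W =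
     distr M (borel \<Otimes>\<^sub>M count_space UNIV \<Otimes>\<^sub>M count_space UNIV \<Otimes>\<^sub>M count_space UNIV)
       (\<lambda>\<omega>. (Yobs Dp Yp Z \<omega>, Dobs Dp Z \<omega>, Z \<omega>, W \<omega>))"

text \<open>Conditional independence given the
  discrete variables (D_1,D_0) resp. W is written out in the elementary product form.\<close>
definition model :: "'a measure \<Rightarrow> (bool \<Rightarrow> 'a \<Rightarrow> bool) \<Rightarrow> (bool \<Rightarrow> bool \<Rightarrow> 'a \<Rightarrow> real)
    \<Rightarrow> ('a \<Rightarrow> bool) \<Rightarrow> ('a \<Rightarrow> bool) \<Rightarrow> (bool \<Rightarrow> real) \<Rightarrow> bool" where
  "model M Dp Yp Z W rho \<longleftrightarrow>
     prob_space M \<and>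
     (\<forall>z. Dp z \<in> measurable M (count_space UNIV)) \<and>
     Z \<in> measurable M (count_space UNIV) \<and> W \<in> measurable M (count_space UNIV) \<and>
     (\<forall>d z. Yp d z \<in> borel_measurable M \<and> integrable M (Yp d z)) \<and>
     \<comment> \<open>(i) homogeneous direct effects\<close>
     (\<forall>G \<in> {AT M Dp, NT M Dp, CP M Dp}. \<forall>d. rhoG M Yp G d = rho d) \<and>
     \<comment> \<open>(ii) monotonicity D_1 \<ge> D_0\<close>
     (\<forall>\<omega> \<in> space M. Dp False \<omega> \<longrightarrow> Dp True \<omega>) \<and>
     \<comment> \<open>(iii-a) (Z,W) independent of Y_{d,z} given (D_1,D_0)\<close>
     (\<forall>d z. \<forall>B \<in> sets borel. \<forall>a b g1 g0.
        measure M (ev M (\<lambda>\<omega>. Z \<omega> = a \<and> W \<omega> = b \<and> Yp d z \<omega> \<in> B \<and> Dp True \<omega> = g1 \<and> Dp False \<omega> = g0))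
          * measure M (ev M (\<lambda>\<omega>. Dp True \<omega> = g1 \<and> Dp False \<omega> = g0))
        = measure M (ev M (\<lambda>\<omega>. Z \<omega> = a \<and> W \<omega> = b \<and> Dp True \<omega> = g1 \<and> Dp False \<omega> = g0))
          * measure M (ev M (\<lambda>\<omega>. Yp d z \<omega> \<in> B \<and> Dp True \<omega> = g1 \<and> Dp False \<omega> = g0))) \<and>
     \<comment> \<open>(iii-b) Z independent of (D_1,D_0) given W\<close>
     (\<forall>a b g1 g0.
        measure M (ev M (\<lambda>\<omega>. Z \<omega> = a \<and> Dp True \<omega> = g1 \<and> Dp False \<omega> = g0 \<and> W \<omega> = b))
          * measure M (ev M (\<lambda>\<omega>. W \<omega> = b))
        = measure M (ev M (\<lambda>\<omega>. Z \<omega> = a \<and> W \<omega> = b))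
          * measure M (ev M (\<lambda>\<omega>. Dp True \<omega> = g1 \<and> Dp False \<omega> = g0 \<and> W \<omega> = b))) \<and>
     \<comment> \<open>(iv) compliers exist\<close>
     measure M (CP M Dp) > 0 \<and>
     \<comment> \<open>(v) full support of (Z,W)\<close>
     (\<forall>a b. 0 < measure M (ev M (\<lambda>\<omega>. Z \<omega> = a \<and> W \<omega> = b)) \<and>
            measure M (ev M (\<lambda>\<omega>. Z \<omega> = a \<and> W \<omega> = b)) < 1) \<and>
     \<comment> \<open>(vi) relevance of W\<close>
     (\<forall>G \<in> {AT M Dp, NT M Dp}.
        cprob M G (ev M (\<lambda>\<omega>. W \<omega>)) * cprob M (CP M Dp) (ev M (\<lambda>\<omega>. \<not> W \<omega>))
        \<noteq> cprob M G (ev M (\<lambda>\<omega>. \<not> W \<omega>)) * cprob M (CP M Dp) (ev M (\<lambda>\<omega>. W \<omega>)))"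

end

theory Submission
  imports Defs
begin
lemma ci_integral:
  fixes M :: "'a measure" and Y :: "'a \<Rightarrow> real"
  assumes ps: "prob_space M" and S[measurable]: "S \<in> sets M" and T[measurable]: "T \<in> sets M"
    and Y[measurable]: "Y \<in> borel_measurable M"
    and ind: "\<And>B. B \<in> sets borel \<Longrightarrow> measure M ({\<omega>\<in>space M. Y \<omega> \<in> B} \<inter> S) * measure M T
                = measure M S * measure M ({\<omega>\<in>space M. Y \<omega> \<in> B} \<inter> T)"
  shows "(\<integral>\<omega>. indicator S \<omega> * Y \<omega> \<partial>M) * measure M T = measure M S * (\<integral>\<omega>. indicator T \<omega> * Y \<omega> \<partial>M)"
proof -
  interpret prob_space M by fact
  define f where "f \<omega> = measure M T * indicator S \<omega>" for \<omega>
  define g where "g \<omega> = measure M S * indicator T \<omega>" for \<omega>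
  have [measurable]: "f \<in> borel_measurable M" "g \<in> borel_measurable M" unfolding f_def g_def by simp_all
  have f0: "\<And>x. 0 \<le> f x" and g0: "\<And>x. 0 \<le> g x" unfolding f_def g_def by auto
  have eq: "distr (density M f) borel Y = distr (density M g) borel Y"
  proof (rule measure_eqI)
    fix B :: "real set" assume B: "B \<in> sets (distr (density M f) borel Y)"
    then have B[measurable]: "B \<in> sets borel" by simp
    have A[measurable]: "Y -` B \<inter> space M \<in> sets M" by measurable
    have "emeasure (distr (density M f) borel Y) B = emeasure (density M f) (Y -` B \<inter> space M)"
      by (subst emeasure_distr) auto
    also have "\<dots> = (\<integral>\<^sup>+ x. ennreal (measure M T) * indicator (S \<inter> (Y -` B \<inter> space M)) x \<partial>M)"
      by (subst emeasure_density) (auto intro!: nn_integral_cong simp: f_def split: split_indicator)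
    also have "\<dots> = ennreal (measure M T) * ennreal (measure M ({\<omega>\<in>space M. Y \<omega> \<in> B} \<inter> S))"
      by (subst nn_integral_cmult_indicator) (auto simp: emeasure_eq_measure Int_commute vimage_def Collect_conj_eq Int_assoc intro!: arg_cong[where f="measure M"])
    also have "\<dots> = ennreal (measure M S) * ennreal (measure M ({\<omega>\<in>space M. Y \<omega> \<in> B} \<inter> T))"
      using ind[OF B] by (simp add: ennreal_mult'[symmetric] mult.commute)
    also have "\<dots> = (\<integral>\<^sup>+ x. ennreal (measure M S) * indicator (T \<inter> (Y -` B \<inter> space M)) x \<partial>M)"
      by (subst nn_integral_cmult_indicator) (auto simp: emeasure_eq_measure Int_commute vimage_def Collect_conj_eq Int_assoc intro!: arg_cong[where f="measure M"])
    also have "\<dots> = emeasure (density M g) (Y -` B \<inter> space M)"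
      by (subst emeasure_density) (auto intro!: nn_integral_cong simp: g_def split: split_indicator)
    also have "\<dots> = emeasure (distr (density M g) borel Y) B"
      by (subst emeasure_distr) auto
    finally show "emeasure (distr (density M f) borel Y) B = emeasure (distr (density M g) borel Y) B" .
  qed simp
  have "(\<integral>\<omega>. f \<omega> * Y \<omega> \<partial>M) = (\<integral>y. y \<partial>distr (density M f) borel Y)"
    using f0 by (subst integral_distr) (auto simp: integral_density)
  also have "\<dots> = (\<integral>y. y \<partial>distr (density M g) borel Y)" by (simp add: eq)
  also have "\<dots> = (\<integral>\<omega>. g \<omega> * Y \<omega> \<partial>M)"
    using g0 by (subst integral_distr) (auto simp: integral_density)
  finally have "(\<integral>\<omega>. f \<omega> * Y \<omega> \<partial>M) = (\<integral>\<omega>. g \<omega> * Y \<omega> \<partial>M)" .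
  then show ?thesis unfolding f_def g_def by (simp add: mult.assoc) (simp add: mult.commute)
qed
abbreviation "OM \<equiv> (borel \<Otimes>\<^sub>M count_space UNIV \<Otimes>\<^sub>M count_space UNIV \<Otimes>\<^sub>M count_space UNIV) :: (real \<times> bool \<times> bool \<times> bool) measure"

definition "NP N d a b = measure N {x. fst (snd x) = d \<and> fst (snd (snd x)) = a \<and> snd (snd (snd x)) = b}"
definition "NZW N a b = measure N {x. fst (snd (snd x)) = a \<and> snd (snd (snd x)) = b}"
definition "NE N d a b = (\<integral>x. (if fst (snd x) = d \<and> fst (snd (snd x)) = a \<and> snd (snd (snd x)) = b then fst x else 0) \<partial>N)"

definition "NpAT N b = NP N True False b / NZW N False b"
definition "NpNT N b = NP N False True b / NZW N True b"
definition "NpCP N b = NP N True True b / NZW N True b - NpAT N b"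
definition "Nu N b = NE N True True b / NZW N True b - NE N True False b / NZW N False b"
definition "Nv N b = NE N False True b / NZW N True b - NE N False False b / NZW N False b"

lemma null_int:
  fixes M :: "'a measure" and Y :: "'a \<Rightarrow> real"
  assumes "prob_space M" "S \<in> sets M" "measure M S = 0"
  shows "(\<integral>\<omega>. indicator S \<omega> * Y \<omega> \<partial>M) = 0"
proof -
  interpret prob_space M by fact
  have "S \<in> null_sets M" using assms by (simp add: null_sets_def emeasure_eq_measure)
  then have "AE x in M. x \<notin> S" by (rule AE_not_in)
  then show ?thesis by (intro integral_eq_zero_AE) (auto elim!: AE_mp)
qed

locale mdl =
  fixes M :: "'a measure" and Dp :: "bool \<Rightarrow> 'a \<Rightarrow> bool" and Yp :: "bool \<Rightarrow> bool \<Rightarrow> 'a \<Rightarrow> real"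
    and Z W :: "'a \<Rightarrow> bool" and rho :: "bool \<Rightarrow> real"
  assumes model: "model M Dp Yp Z W rho"
begin

lemma ps: "prob_space M" using model by (simp add: model_def)

sublocale prob_space M by (rule ps)

lemma meas[measurable]: "Dp z \<in> measurable M (count_space UNIV)" "Z \<in> measurable M (count_space UNIV)"
  "W \<in> measurable M (count_space UNIV)" "Yp d z \<in> borel_measurable M"
  using model by (simp_all add: model_def)

lemma intg: "integrable M (Yp d z)" using model by (simp add: model_def)

lemma mono: "\<omega> \<in> space M \<Longrightarrow> Dp False \<omega> \<Longrightarrow> Dp True \<omega>" using model by (simp add: model_def)

lemma ev_sets[measurable]: "ev M (\<lambda>\<omega>. Z \<omega> = a \<and> W \<omega> = b \<and> Dp True \<omega> = g1 \<and> Dp False \<omega> = g0) \<in> sets M"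
  "ev M (\<lambda>\<omega>. Dp True \<omega> = g1 \<and> Dp False \<omega> = g0) \<in> sets M"
  "ev M (\<lambda>\<omega>. Z \<omega> = a \<and> W \<omega> = b) \<in> sets M"
  "ev M (\<lambda>\<omega>. W \<omega> = b) \<in> sets M"
  "ev M (\<lambda>\<omega>. Dp True \<omega> = g1 \<and> Dp False \<omega> = g0 \<and> W \<omega> = b) \<in> sets M"
  unfolding ev_def by measurable

definition "SS a b g1 g0 = ev M (\<lambda>\<omega>. Z \<omega> = a \<and> W \<omega> = b \<and> Dp True \<omega> = g1 \<and> Dp False \<omega> = g0)"
definition "TT g1 g0 = ev M (\<lambda>\<omega>. Dp True \<omega> = g1 \<and> Dp False \<omega> = g0)"
definition "PZW a b = measure M (ev M (\<lambda>\<omega>. Z \<omega> = a \<and> W \<omega> = b))"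
definition "q a b g1 g0 = measure M (SS a b g1 g0)"
definition "Ev d z a b g1 g0 = (\<integral>\<omega>. indicator (SS a b g1 g0) \<omega> * Yp d z \<omega> \<partial>M)"
definition "mm d z g1 g0 = cexp M (Yp d z) (TT g1 g0)"
definition "pp b g1 g0 = cprob M (TT g1 g0) (ev M (\<lambda>\<omega>. W \<omega> = b))"

lemma SS_sets[measurable]: "SS a b g1 g0 \<in> sets M" and TT_sets[measurable]: "TT g1 g0 \<in> sets M"
  unfolding SS_def TT_def by measurable

lemma F1: "Ev d z a b g1 g0 = q a b g1 g0 * mm d z g1 g0"
proof -
  have ind: "measure M ({\<omega>\<in>space M. Yp d z \<omega> \<in> B} \<inter> SS a b g1 g0) * measure M (TT g1 g0)
     = measure M (SS a b g1 g0) * measure M ({\<omega>\<in>space M. Yp d z \<omega> \<in> B} \<inter> TT g1 g0)"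
    if B: "B \<in> sets borel" for B
  proof -
    have "\<forall>B \<in> sets borel. measure M (ev M (\<lambda>\<omega>. Z \<omega> = a \<and> W \<omega> = b \<and> Yp d z \<omega> \<in> B \<and> Dp True \<omega> = g1 \<and> Dp False \<omega> = g0))
          * measure M (ev M (\<lambda>\<omega>. Dp True \<omega> = g1 \<and> Dp False \<omega> = g0))
        = measure M (ev M (\<lambda>\<omega>. Z \<omega> = a \<and> W \<omega> = b \<and> Dp True \<omega> = g1 \<and> Dp False \<omega> = g0))
          * measure M (ev M (\<lambda>\<omega>. Yp d z \<omega> \<in> B \<and> Dp True \<omega> = g1 \<and> Dp False \<omega> = g0))"
      using model unfolding model_def by blast
    then show ?thesis using B unfolding SS_def TT_def ev_def
      by (auto simp: conj_commute conj_left_commute Collect_conj_eq[symmetric] Int_def)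
  qed
  have ci: "Ev d z a b g1 g0 * measure M (TT g1 g0) = q a b g1 g0 * (\<integral>\<omega>. indicator (TT g1 g0) \<omega> * Yp d z \<omega> \<partial>M)"
    unfolding Ev_def q_def by (rule ci_integral[OF ps SS_sets TT_sets meas(4) ind])
  have sub: "SS a b g1 g0 \<subseteq> TT g1 g0" unfolding SS_def TT_def ev_def by auto
  show ?thesis
  proof (cases "measure M (TT g1 g0) = 0")
    case True
    then have "q a b g1 g0 = 0" unfolding q_def using sub
      by (metis measure_nonneg order_antisym finite_measure_mono TT_sets)
    moreover have "Ev d z a b g1 g0 = 0" unfolding Ev_def
      by (rule null_int[OF ps SS_sets]) (use \<open>q a b g1 g0 = 0\<close> in \<open>simp add: q_def\<close>)
    ultimately show ?thesis by simp
  next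
    case False
    then show ?thesis using ci unfolding mm_def cexp_def by (simp add: field_simps)
  qed
qed

end

context mdl begin

lemma X_meas[measurable]: "(\<lambda>\<omega>. (Yobs Dp Yp Z \<omega>, Dobs Dp Z \<omega>, Z \<omega>, W \<omega>)) \<in> measurable M OM"
  unfolding Yobs_def Dobs_def Yd_def by measurable

lemma NP_eq: "NP (obs_dist M Dp Yp Z W) d a b = measure M (ev M (\<lambda>\<omega>. Dobs Dp Z \<omega> = d \<and> Z \<omega> = a \<and> W \<omega> = b))"
proof -
  have "{x::real \<times> bool \<times> bool \<times> bool. fst (snd x) = d \<and> fst (snd (snd x)) = a \<and> snd (snd (snd x)) = b} \<in> sets OM"
  proof -
    have "{x::real \<times> bool \<times> bool \<times> bool. fst (snd x) = d \<and> fst (snd (snd x)) = a \<and> snd (snd (snd x)) = b}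
       = {x \<in> space OM. fst (snd x) = d \<and> fst (snd (snd x)) = a \<and> snd (snd (snd x)) = b}" by (simp add: space_pair_measure)
    also have "\<dots> \<in> sets OM" by measurable
    finally show ?thesis .
  qed
  then show ?thesis unfolding NP_def obs_dist_def
    by (subst measure_distr[OF X_meas]) (auto simp: ev_def vimage_def intro!: arg_cong[where f="measure M"])
qed

lemma NZW_eq: "NZW (obs_dist M Dp Yp Z W) a b = PZW a b"
proof -
  have "{x::real \<times> bool \<times> bool \<times> bool. fst (snd (snd x)) = a \<and> snd (snd (snd x)) = b} \<in> sets OM"
  proof -
    have "{x::real \<times> bool \<times> bool \<times> bool. fst (snd (snd x)) = a \<and> snd (snd (snd x)) = b}
       = {x \<in> space OM. fst (snd (snd x)) = a \<and> snd (snd (snd x)) = b}" by (simp add: space_pair_measure)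
    also have "\<dots> \<in> sets OM" by measurable
    finally show ?thesis .
  qed
  then show ?thesis unfolding NZW_def obs_dist_def PZW_def
    by (subst measure_distr[OF X_meas]) (auto simp: ev_def vimage_def intro!: arg_cong[where f="measure M"])
qed

lemma NE_eq: "NE (obs_dist M Dp Yp Z W) d a b =
   (\<integral>\<omega>. (if Dobs Dp Z \<omega> = d \<and> Z \<omega> = a \<and> W \<omega> = b then Yobs Dp Yp Z \<omega> else 0) \<partial>M)"
proof -
  have m: "(\<lambda>x::real \<times> bool \<times> bool \<times> bool. (if fst (snd x) = d \<and> fst (snd (snd x)) = a \<and> snd (snd (snd x)) = b then fst x else 0)) \<in> borel_measurable OM"
    by measurable
  show ?thesis unfolding NE_def obs_dist_def integral_distr[OF X_meas m] by (simp cong: if_cong)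
qed

end

lemma cexp_diff:
  fixes M :: "'a measure"
  assumes "integrable M X" "integrable M Y" "A \<in> sets M"
  shows "cexp M (\<lambda>\<omega>. X \<omega> - Y \<omega>) A = cexp M X A - cexp M Y A"
proof -
  have "(\<integral>\<omega>. indicator A \<omega> * (X \<omega> - Y \<omega>) \<partial>M) = (\<integral>\<omega>. indicator A \<omega> * X \<omega> - indicator A \<omega> * Y \<omega> \<partial>M)"
    by (simp add: right_diff_distrib)
  also have "\<dots> = (\<integral>\<omega>. indicator A \<omega> * X \<omega> \<partial>M) - (\<integral>\<omega>. indicator A \<omega> * Y \<omega> \<partial>M)"
    using integrable_mult_indicator[OF assms(3) assms(1)] integrable_mult_indicator[OF assms(3) assms(2)]
    by (intro Bochner_Integration.integral_diff) simp_all
  finally show ?thesis unfolding cexp_def by (simp add: diff_divide_distrib)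
qed

lemma solve2:
  fixes a1 a0 p1 p0 r r' c c' :: real
  assumes "a1 * r + p1 * c = a1 * r' + p1 * c'" "a0 * r + p0 * c = a0 * r' + p0 * c'"
    and "a1 * p0 \<noteq> a0 * p1"
  shows "r = r' \<and> c = c'"
proof -
  have e1: "a1 * (r - r') + p1 * (c - c') = 0" "a0 * (r - r') + p0 * (c - c') = 0"
    using assms(1,2) by (simp_all add: algebra_simps)
  have "(a1 * p0 - a0 * p1) * (r - r') = p0 * (a1 * (r - r') + p1 * (c - c')) - p1 * (a0 * (r - r') + p0 * (c - c'))"
    by (simp add: algebra_simps)
  then have "(a1 * p0 - a0 * p1) * (r - r') = 0" using e1 by simp
  then have r: "r = r'" using assms(3) by simp
  have "(a1 * p0 - a0 * p1) * (c - c') = a1 * (a0 * (r - r') + p0 * (c - c')) - a0 * (a1 * (r - r') + p1 * (c - c'))"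
    by (simp add: algebra_simps)
  then have "(a1 * p0 - a0 * p1) * (c - c') = 0" using e1 by simp
  then have "c = c'" using assms(3) by simp
  with r show ?thesis by simp
qed

definition "Lf N c1 c0 r1 r0 =
  (NZW N True True * NpCP N True * (c1 - c0 - r0) + NZW N True False * NpCP N False * (c1 - c0 - r0)
   + NZW N False True * NpCP N True * (c1 - c0 - r1) + NZW N False False * NpCP N False * (c1 - c0 - r1))
  / (NZW N True True * NpCP N True + NZW N True False * NpCP N False
   + NZW N False True * NpCP N True + NZW N False False * NpCP N False)"

context mdl begin

lemma intS: "A \<in> sets M \<Longrightarrow> integrable M (\<lambda>\<omega>. indicator A \<omega> * Yp d z \<omega>)"
  using integrable_mult_indicator[of A M "Yp d z"] intg by simp

lemma F3: "PZW a b > 0"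
  using model unfolding model_def PZW_def by blast

lemma PW: "measure M (ev M (\<lambda>\<omega>. W \<omega> = b)) > 0"
proof -
  have "PZW True b \<le> measure M (ev M (\<lambda>\<omega>. W \<omega> = b))" unfolding PZW_def
    by (rule finite_measure_mono) (auto simp: ev_def)
  with F3[of True b] show ?thesis by simp
qed

lemma F2: "q a b g1 g0 = PZW a b * pp b g1 g0"
proof -
  have "measure M (ev M (\<lambda>\<omega>. Z \<omega> = a \<and> Dp True \<omega> = g1 \<and> Dp False \<omega> = g0 \<and> W \<omega> = b))
          * measure M (ev M (\<lambda>\<omega>. W \<omega> = b))
        = measure M (ev M (\<lambda>\<omega>. Z \<omega> = a \<and> W \<omega> = b))
          * measure M (ev M (\<lambda>\<omega>. Dp True \<omega> = g1 \<and> Dp False \<omega> = g0 \<and> W \<omega> = b))"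
    using model unfolding model_def by blast
  moreover have "ev M (\<lambda>\<omega>. Z \<omega> = a \<and> Dp True \<omega> = g1 \<and> Dp False \<omega> = g0 \<and> W \<omega> = b) = SS a b g1 g0"
    unfolding SS_def ev_def by auto
  moreover have "TT g1 g0 \<inter> ev M (\<lambda>\<omega>. W \<omega> = b) = ev M (\<lambda>\<omega>. Dp True \<omega> = g1 \<and> Dp False \<omega> = g0 \<and> W \<omega> = b)"
    unfolding TT_def ev_def by auto
  ultimately show ?thesis using PW[of b] unfolding q_def pp_def cprob_def PZW_def
    by (simp add: field_simps)
qed

lemma F1': "Ev d z a b g1 g0 = PZW a b * pp b g1 g0 * mm d z g1 g0"
  using F1 F2 by simp

lemma F4: "(g1 = True \<and> g0 = True) \<or> (g1 = False \<and> g0 = False) \<or> (g1 = True \<and> g0 = False) \<Longrightarrow>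
   mm d True g1 g0 - mm d False g1 g0 = rho d"
proof -
  assume g: "(g1 = True \<and> g0 = True) \<or> (g1 = False \<and> g0 = False) \<or> (g1 = True \<and> g0 = False)"
  have "TT g1 g0 \<in> {AT M Dp, NT M Dp, CP M Dp}" using g
    unfolding TT_def AT_def NT_def CP_def by auto
  then have "rhoG M Yp (TT g1 g0) d = rho d" using model unfolding model_def by blast
  then show ?thesis unfolding rhoG_def mm_def
    by (subst (asm) cexp_diff[OF intg intg TT_sets]) simp
qed

lemma ind_meas: "A \<in> sets M \<Longrightarrow> measure M A = (\<integral>\<omega>. indicator A \<omega> \<partial>M)"
  by (simp add: sets.Int_space_eq2)

abbreviation "N \<equiv> obs_dist M Dp Yp Z W"

lemma D11: "NE N True True b = Ev True True True b True True + Ev True True True b True False"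
proof -
  have "NE N True True b = (\<integral>\<omega>. indicator (SS True b True True) \<omega> * Yp True True \<omega> + indicator (SS True b True False) \<omega> * Yp True True \<omega> \<partial>M)"
    unfolding NE_eq
    by (rule Bochner_Integration.integral_cong) (auto simp: SS_def ev_def Dobs_def Yobs_def Yd_def split: split_indicator dest: mono)
  also have "\<dots> = Ev True True True b True True + Ev True True True b True False"
    unfolding Ev_def by (rule Bochner_Integration.integral_add; rule intS; simp)
  finally show ?thesis .
qed

lemma D00: "NE N False False b = Ev False False False b False False + Ev False False False b True False"
proof -
  have "NE N False False b = (\<integral>\<omega>. indicator (SS False b False False) \<omega> * Yp False False \<omega> + indicator (SS False b True False) \<omega> * Yp False False \<omega> \<partial>M)"
    unfolding NE_eq
    by (rule Bochner_Integration.integral_cong) (auto simp: SS_def ev_def Dobs_def Yobs_def Yd_def split: split_indicator dest: mono)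
  also have "\<dots> = Ev False False False b False False + Ev False False False b True False"
    unfolding Ev_def by (rule Bochner_Integration.integral_add; rule intS; simp)
  finally show ?thesis .
qed

lemma D10: "NE N True False b = Ev True False False b True True"
  unfolding NE_eq Ev_def
  by (rule Bochner_Integration.integral_cong) (auto simp: SS_def ev_def Dobs_def Yobs_def Yd_def split: split_indicator dest: mono)

lemma D01: "NE N False True b = Ev False True True b False False"
  unfolding NE_eq Ev_def
  by (rule Bochner_Integration.integral_cong) (auto simp: SS_def ev_def Dobs_def Yobs_def Yd_def split: split_indicator dest: mono)

lemma P10: "NP N True False b = q False b True True"
  unfolding NP_eq q_def
  by (rule arg_cong[where f="measure M"]) (auto simp: SS_def ev_def Dobs_def dest: mono)

lemma P01: "NP N False True b = q True b False False"
  unfolding NP_eq q_def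
  by (rule arg_cong[where f="measure M"]) (auto simp: SS_def ev_def Dobs_def dest: mono)

lemma P11: "NP N True True b = q True b True True + q True b True False"
proof -
  have "NP N True True b = (\<integral>\<omega>. indicator (ev M (\<lambda>\<omega>. Dobs Dp Z \<omega> = True \<and> Z \<omega> = True \<and> W \<omega> = b)) \<omega> \<partial>M)"
    unfolding NP_eq by (rule ind_meas) (simp add: ev_def Dobs_def)
  also have "\<dots> = (\<integral>\<omega>. indicator (SS True b True True) \<omega> + indicator (SS True b True False) \<omega> \<partial>M)"
    by (rule Bochner_Integration.integral_cong) (auto simp: SS_def ev_def Dobs_def split: split_indicator)
  also have "\<dots> = q True b True True + q True b True False"
    unfolding q_def by (subst Bochner_Integration.integral_add) (auto simp: sets.Int_space_eq2 integrable_indicator_iff emeasure_eq_measure)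
  finally show ?thesis .
qed

end


context mdl begin

lemma ppAT: "pp b True True = NpAT N b"
  unfolding NpAT_def P10 NZW_eq F2 using F3[of False b] by simp

lemma ppNT: "pp b False False = NpNT N b"
  unfolding NpNT_def P01 NZW_eq F2 using F3[of True b] by simp

lemma ppCP: "pp b True False = NpCP N b"
  unfolding NpCP_def ppAT[symmetric] P11 NZW_eq F2 using F3[of True b] by (simp add: field_simps)

lemma uu: "Nu N b = NpAT N b * rho True + NpCP N b * mm True True True False"
proof -
  have r: "rho True = mm True True True True - mm True False True True" by (simp add: F4)
  show ?thesis
    unfolding Nu_def D11 D10 NZW_eq F1' ppAT[symmetric] ppCP[symmetric] r
    using F3[of True b] F3[of False b] by (simp add: field_simps)
qed

lemma vv: "Nv N b = NpNT N b * rho False + NpCP N b * (- mm False False True False)"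
proof -
  have r: "rho False = mm False True False False - mm False False False False" by (simp add: F4)
  show ?thesis
    unfolding Nv_def D01 D00 NZW_eq F1' ppNT[symmetric] ppCP[symmetric] r
    using F3[of True b] F3[of False b] by (simp add: field_simps)
qed

lemma CP_TT: "CP M Dp = TT True False" and AT_TT: "AT M Dp = TT True True" and NT_TT: "NT M Dp = TT False False"
  unfolding CP_def AT_def NT_def TT_def by simp_all

lemma vi: "NpAT N True * NpCP N False \<noteq> NpAT N False * NpCP N True"
   "NpNT N True * NpCP N False \<noteq> NpNT N False * NpCP N True"
proof -
  have e: "ev M (\<lambda>\<omega>. W \<omega>) = ev M (\<lambda>\<omega>. W \<omega> = True)" "ev M (\<lambda>\<omega>. \<not> W \<omega>) = ev M (\<lambda>\<omega>. W \<omega> = False)"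
    by simp_all
  have "\<forall>G \<in> {AT M Dp, NT M Dp}.
        cprob M G (ev M (\<lambda>\<omega>. W \<omega>)) * cprob M (CP M Dp) (ev M (\<lambda>\<omega>. \<not> W \<omega>))
        \<noteq> cprob M G (ev M (\<lambda>\<omega>. \<not> W \<omega>)) * cprob M (CP M Dp) (ev M (\<lambda>\<omega>. W \<omega>))"
    using model unfolding model_def by blast
  then have "pp True True True * pp False True False \<noteq> pp False True True * pp True True False"
     "pp True False False * pp False True False \<noteq> pp False False False * pp True True False"
    unfolding e pp_def CP_TT AT_TT NT_TT by auto
  then show "NpAT N True * NpCP N False \<noteq> NpAT N False * NpCP N True"
   "NpNT N True * NpCP N False \<noteq> NpNT N False * NpCP N True"
    by (simp_all add: ppAT ppNT ppCP)
qed

lemma late: "LATE M Dp Yp Z = Lf N (mm True True True False) (mm False False True False) (rho True) (rho False)"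
proof -
  let ?S = "\<lambda>a b. SS a b True False"
  have num: "(\<integral>\<omega>. indicator (CP M Dp) \<omega> * (Yd Yp Z True \<omega> - Yd Yp Z False \<omega>) \<partial>M)
     = (\<integral>\<omega>. (indicator (?S True True) \<omega> * Yp True True \<omega> - indicator (?S True True) \<omega> * Yp False True \<omega>)
          + (indicator (?S True False) \<omega> * Yp True True \<omega> - indicator (?S True False) \<omega> * Yp False True \<omega>)
          + (indicator (?S False True) \<omega> * Yp True False \<omega> - indicator (?S False True) \<omega> * Yp False False \<omega>)
          + (indicator (?S False False) \<omega> * Yp True False \<omega> - indicator (?S False False) \<omega> * Yp False False \<omega>) \<partial>M)"
    by (rule Bochner_Integration.integral_cong) (auto simp: CP_def SS_def ev_def Yd_def split: split_indicator)
  also have "\<dots> = (Ev True True True True True False - Ev False True True True True False)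
      + (Ev True True True False True False - Ev False True True False True False)
      + (Ev True False False True True False - Ev False False False True True False)
      + (Ev True False False False True False - Ev False False False False True False)"
    unfolding Ev_def
    by (simp add: intS Bochner_Integration.integral_add Bochner_Integration.integral_diff)
  finally have num: "(\<integral>\<omega>. indicator (CP M Dp) \<omega> * (Yd Yp Z True \<omega> - Yd Yp Z False \<omega>) \<partial>M) = \<dots>" .
  have den: "measure M (CP M Dp) = q True True True False + q True False True False + q False True True False + q False False True False"
  proof -
    have "measure M (CP M Dp) = (\<integral>\<omega>. indicator (CP M Dp) \<omega> \<partial>M)"
      unfolding CP_TT by (rule ind_meas) simp
    also have "\<dots> = (\<integral>\<omega>. indicator (?S True True) \<omega> + indicator (?S True False) \<omega> + indicator (?S False True) \<omega> + indicator (?S False False) \<omega> \<partial>M)"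
      by (rule Bochner_Integration.integral_cong) (auto simp: CP_def SS_def ev_def split: split_indicator)
    also have "\<dots> = q True True True False + q True False True False + q False True True False + q False False True False"
      unfolding q_def
      by (simp add: Bochner_Integration.integral_add sets.Int_space_eq2 integrable_indicator_iff emeasure_eq_measure)
    finally show ?thesis .
  qed
  have r1: "mm True False True False = mm True True True False - rho True"
    using F4[of True False True] by simp
  have r0: "mm False True True False = mm False False True False + rho False"
    using F4[of True False False] by simp
  show ?thesis
    unfolding LATE_def cexp_def num den Lf_def F1' F2 r1 r0 NZW_eq ppCP[symmetric]
    by (simp add: algebra_simps)
qed

end

theorem theorem1:
  fixes M :: "'a measure" and Dp :: "bool \<Rightarrow> 'a \<Rightarrow> bool" and Yp :: "bool \<Rightarrow> bool \<Rightarrow> 'a \<Rightarrow> real"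
    and Z W :: "'a \<Rightarrow> bool" and rho :: "bool \<Rightarrow> real"
    and M' :: "'b measure" and Dp' :: "bool \<Rightarrow> 'b \<Rightarrow> bool" and Yp' :: "bool \<Rightarrow> bool \<Rightarrow> 'b \<Rightarrow> real"
    and Z' W' :: "'b \<Rightarrow> bool" and rho' :: "bool \<Rightarrow> real"
  assumes "model M Dp Yp Z W rho"
    and "model M' Dp' Yp' Z' W' rho'"
    and "obs_dist M Dp Yp Z W = obs_dist M' Dp' Yp' Z' W'"
  shows "rho True = rho' True \<and> rho False = rho' False \<and> LATE M Dp Yp Z = LATE M' Dp' Yp' Z'"
proof -
  interpret A: mdl M Dp Yp Z W rho by (rule mdl.intro) (rule assms(1))
  interpret B: mdl M' Dp' Yp' Z' W' rho' by (rule mdl.intro) (rule assms(2))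
  define N where "N = obs_dist M Dp Yp Z W"
  have NB: "obs_dist M' Dp' Yp' Z' W' = N" using assms(3) by (simp add: N_def)
  have u1: "\<And>b. Nu N b = NpAT N b * rho True + NpCP N b * A.mm True True True False"
    unfolding N_def by (rule A.uu)
  have u2: "\<And>b. Nu N b = NpAT N b * rho' True + NpCP N b * B.mm True True True False"
    using B.uu unfolding NB .
  have v1: "\<And>b. Nv N b = NpNT N b * rho False + NpCP N b * (- A.mm False False True False)"
    unfolding N_def by (rule A.vv)
  have v2: "\<And>b. Nv N b = NpNT N b * rho' False + NpCP N b * (- B.mm False False True False)"
    using B.vv unfolding NB .
  have vi: "NpAT N True * NpCP N False \<noteq> NpAT N False * NpCP N True"
     "NpNT N True * NpCP N False \<noteq> NpNT N False * NpCP N True"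
    unfolding N_def by (rule A.vi(1), rule A.vi(2))
  have s1: "rho True = rho' True \<and> A.mm True True True False = B.mm True True True False"
    by (rule solve2[OF _ _ vi(1)]) (metis u1 u2)+
  have s0: "rho False = rho' False \<and> - A.mm False False True False = - B.mm False False True False"
    by (rule solve2[OF _ _ vi(2)]) (metis v1 v2)+
  have "LATE M Dp Yp Z = Lf N (A.mm True True True False) (A.mm False False True False) (rho True) (rho False)"
    unfolding N_def by (rule A.late)
  moreover have "LATE M' Dp' Yp' Z' = Lf N (B.mm True True True False) (B.mm False False True False) (rho' True) (rho' False)"
    using B.late unfolding NB .
  ultimately show ?thesis using s1 s0 by simp
qed

end
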